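(* Let $n\ge 3$, let $a_0,\ldots,a_{n-1}$ be indeterminates over $\mathbb{Q}$ and $f=x^n+a_{n-1}x^{n-1}+\cdots+a_0$. For each integer $m$ put $\varphi_m(x)=f^{(m)}(x)/m!$ if $1\le m\le n$ and $\varphi_m=0$ if $m\le 0$ or $m>n$. Let $M$ be the infinite matrix with entries $M_{2s-1,l}=\varphi_{2(l-s)+2}$, $M_{2s,l}=\varphi_{2(l-s)+1}$ ($s,l\ge 1$), and let $H$ be its $(n-2)$th leading principal minor. Then $\deg(H,x)=(n-1)(n-2)/2$.
   Context: $f^{(m)}$ is the $m$th derivative of $f$ with respect to $x$; $\deg(H,x)$ is the degree of $H$ as a polynomial in $x$ with coefficients in $\mathbb{Q}[a_0,\ldots,a_{n-1}]$. *)

theory Defs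
  imports "HOL-Library.Poly_Mapping" "Jordan_Normal_Form.Determinant"
begin

text \<open>The coefficient ring Q[a_0,...,a_{n-1}] (indeed Q[a_0,a_1,...]) is rendered as
  multivariate polynomials over rat: finitely supported maps from monomials
  (finitely supported exponent vectors) to rat coefficients.\<close>

type_synonym mpoly_Q = "(nat \<Rightarrow>\<^sub>0 nat) \<Rightarrow>\<^sub>0 rat"

definition mvar :: "nat \<Rightarrow> mpoly_Q" where
  "mvar i = Poly_Mapping.single (Poly_Mapping.single i 1) 1"

definition mconst :: "rat \<Rightarrow> mpoly_Q" where
  "mconst c = Poly_Mapping.single 0 c"

definition gen_f :: "nat \<Rightarrow> mpoly_Q poly" where
  "gen_f n = monom 1 n + (\<Sum>i<n. monom (mvar i) i)"

definition phi :: "nat \<Rightarrow> int \<Rightarrow> mpoly_Q poly" where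
  "phi n m = (if 1 \<le> m \<and> m \<le> int n
     then smult (mconst (1 / of_nat (fact (nat m)))) ((pderiv ^^ nat m) (gen_f n))
     else 0)"

text \<open>Entries of the infinite matrix M (1-based indices r, l \<ge> 1):
  M_{2s-1,l} = phi_{2(l-s)+2}, M_{2s,l} = phi_{2(l-s)+1}.\<close>
definition M_entry :: "nat \<Rightarrow> nat \<Rightarrow> nat \<Rightarrow> mpoly_Q poly" where
  "M_entry n r l = (if odd r
     then phi n (2 * (int l - (int r + 1) div 2) + 2)
     else phi n (2 * (int l - int r div 2) + 1))"

definition H_minor :: "nat \<Rightarrow> nat \<Rightarrow> mpoly_Q poly" where
  "H_minor n k = det (mat k k (\<lambda>(i, j). M_entry n (i + 1) (j + 1)))"

end

theory Submission imports Defs "HOL-Computational_Algebra.Fundamental_Theorem_Algebra" "HOL-Computational_Algebra.Field_as_Ring" begin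

lemma coeff_mult_bound:
  fixes p q :: "'a::comm_semiring_1 poly"
  assumes "degree p \<le> m" "degree q \<le> k"
  shows "coeff (p*q) (m+k) = coeff p m * coeff q k"
proof (cases "degree p = m \<and> degree q = k")
  case True then show ?thesis using coeff_mult_degree_sum[of p q] by simp
next
  case False
  then have "degree p < m \<or> degree q < k" using assms by auto
  moreover have "degree (p*q) \<le> degree p + degree q" by (rule degree_mult_le)
  ultimately have "degree (p*q) < m + k" using assms by linarith
  then have "coeff (p*q) (m+k) = 0" by (simp add: coeff_eq_0)
  moreover have "coeff p m * coeff q k = 0" using \<open>degree p < m \<or> degree q < k\<close>
    by (auto simp: coeff_eq_0)
  ultimately show ?thesis by simp
qed

lemma coeff_prod_bound:
  fixes f :: "'b \<Rightarrow> 'a::comm_semiring_1 poly"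
  assumes "finite A" "\<And>i. i \<in> A \<Longrightarrow> degree (f i) \<le> d i"
  shows "degree (\<Prod>i\<in>A. f i) \<le> (\<Sum>i\<in>A. d i) \<and>
         coeff (\<Prod>i\<in>A. f i) (\<Sum>i\<in>A. d i) = (\<Prod>i\<in>A. coeff (f i) (d i))"
  using assms
proof (induction A rule: finite_induct)
  case empty then show ?case by simp
next
  case (insert x F)
  then have IH: "degree (\<Prod>i\<in>F. f i) \<le> (\<Sum>i\<in>F. d i)"
    "coeff (\<Prod>i\<in>F. f i) (\<Sum>i\<in>F. d i) = (\<Prod>i\<in>F. coeff (f i) (d i))" by auto
  have dx: "degree (f x) \<le> d x" using insert by auto
  have "degree (f x * (\<Prod>i\<in>F. f i)) \<le> d x + (\<Sum>i\<in>F. d i)"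
    using degree_mult_le[of "f x" "\<Prod>i\<in>F. f i"] IH(1) dx by linarith
  moreover have "coeff (f x * (\<Prod>i\<in>F. f i)) (d x + (\<Sum>i\<in>F. d i)) = coeff (f x) (d x) * (\<Prod>i\<in>F. coeff (f i) (d i))"
    using coeff_mult_bound[OF dx IH(1)] IH(2) by simp
  ultimately show ?case using insert by simp
qed

lemma coeff_of_int_mult: "coeff (of_int a * (P::'a::comm_ring_1 poly)) d = of_int a * coeff P d"
  by (metis coeff_smult mult.commute mult_smult_right of_int_hom.hom_one mult.right_neutral smult_one of_int_poly)


lemma perm_prod_weight:
  fixes F :: "nat \<Rightarrow> nat \<Rightarrow> 'a::comm_ring_1 poly" and c :: int
  assumes p: "p permutes {0..<k}"
  assumes hyp: "\<And>i j. i<k \<Longrightarrow> j<k \<Longrightarrow> F i j \<noteq> 0 \<Longrightarrow> 0 \<le> c + int i - 2*int j \<and> degree (F i j) \<le> nat (c + int i - 2*int j)"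
  shows "degree (\<Prod>i=0..<k. F i (p i)) \<le> nat (int k * c - (\<Sum>i<k. int i)) \<and>
    coeff (\<Prod>i=0..<k. F i (p i)) (nat (int k * c - (\<Sum>i<k. int i))) = (\<Prod>i=0..<k. coeff (F i (p i)) (nat (c + int i - 2*int (p i))))"
proof (cases "\<exists>i<k. F i (p i) = 0")
  case True
  then obtain i where i: "i<k" "F i (p i) = 0" by auto
  then have "(\<Prod>i=0..<k. F i (p i)) = 0" by (intro prod_zero) auto
  moreover have "(\<Prod>i=0..<k. coeff (F i (p i)) (nat (c + int i - 2*int (p i)))) = 0"
    using i by (intro prod_zero) (auto intro!: bexI[of _ i])
  ultimately show ?thesis by simp
next
  case False
  have pk: "i<k \<Longrightarrow> p i < k" for i using permutes_in_image[OF p, of i] by auto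
  have ok: "0 \<le> c + int i - 2*int (p i) \<and> degree (F i (p i)) \<le> nat (c + int i - 2*int (p i))" if "i \<in> {0..<k}" for i
    using hyp[of i "p i"] False pk that by auto
  have sp: "(\<Sum>i=0..<k. int (p i)) = (\<Sum>i=0..<k. int i)"
    using sum.permute[OF p, of int] by (simp add: comp_def)
  have "(\<Sum>i=0..<k. c + int i - 2*int (p i)) = int k * c + (\<Sum>i=0..<k. int i) - 2 * (\<Sum>i=0..<k. int (p i))"
    by (simp add: sum.distrib sum_subtractf sum_distrib_left)
  also have "\<dots> = int k * c - (\<Sum>i<k. int i)" using sp by (simp add: atLeast0LessThan)
  finally have es: "(\<Sum>i=0..<k. c + int i - 2*int (p i)) = int k * c - (\<Sum>i<k. int i)" .
  have "(\<Sum>i=0..<k. nat (c + int i - 2*int (p i))) = nat (\<Sum>i=0..<k. c + int i - 2*int (p i))"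
  proof -
    have "int (\<Sum>i=0..<k. nat (c + int i - 2*int (p i))) = (\<Sum>i=0..<k. int (nat (c + int i - 2*int (p i))))"
      by (simp add: of_nat_sum)
    also have "\<dots> = (\<Sum>i=0..<k. c + int i - 2*int (p i))"
      using ok by (intro sum.cong) auto
    finally show ?thesis by linarith
  qed
  with es have ns: "(\<Sum>i=0..<k. nat (c + int i - 2*int (p i))) = nat (int k * c - (\<Sum>i<k. int i))" by simp
  from coeff_prod_bound[of "{0..<k}" "\<lambda>i. F i (p i)" "\<lambda>i. nat (c + int i - 2*int (p i))"] ok
  show ?thesis unfolding ns by auto
qed


lemma det_weight:
  fixes F :: "nat \<Rightarrow> nat \<Rightarrow> 'a::comm_ring_1 poly" and c :: int
  assumes hyp: "\<And>i j. i<k \<Longrightarrow> j<k \<Longrightarrow> F i j \<noteq> 0 \<Longrightarrow> 0 \<le> c + int i - 2*int j \<and> degree (F i j) \<le> nat (c + int i - 2*int j)"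
  shows "degree (det (mat k k (\<lambda>(i,j). F i j))) \<le> nat (int k * c - (\<Sum>i<k. int i)) \<and>
    coeff (det (mat k k (\<lambda>(i,j). F i j))) (nat (int k * c - (\<Sum>i<k. int i)))
     = det (mat k k (\<lambda>(i,j). coeff (F i j) (nat (c + int i - 2*int j))))"
proof -
  define D where "D = nat (int k * c - (\<Sum>i<k. int i))"
  let ?P = "{p. p permutes {0..<k}}"
  have pk: "p permutes {0..<k} \<Longrightarrow> i<k \<Longrightarrow> p i < k" for p i using permutes_in_image[of p "{0..<k}" i] by auto
  have d1: "det (mat k k (\<lambda>(i,j). F i j)) = (\<Sum>p\<in>?P. signof p * (\<Prod>i=0..<k. F i (p i)))"
    by (subst det_def'[of _ k]) (auto intro!: sum.cong prod.cong simp: pk)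
  have d2: "det (mat k k (\<lambda>(i,j). coeff (F i j) (nat (c + int i - 2*int j)))) =
     (\<Sum>p\<in>?P. signof p * (\<Prod>i=0..<k. coeff (F i (p i)) (nat (c + int i - 2*int (p i)))))"
    by (subst det_def'[of _ k]) (auto intro!: sum.cong prod.cong simp: pk)
  have w: "p \<in> ?P \<Longrightarrow> degree (\<Prod>i=0..<k. F i (p i)) \<le> D \<and>
    coeff (\<Prod>i=0..<k. F i (p i)) D = (\<Prod>i=0..<k. coeff (F i (p i)) (nat (c + int i - 2*int (p i))))" for p
    unfolding D_def by (rule perm_prod_weight) (use hyp in auto)
  have "degree (signof p * (\<Prod>i=0..<k. F i (p i)) :: 'a poly) \<le> D" if "p \<in> ?P" for p
  proof -
    have "degree (signof p * (\<Prod>i=0..<k. F i (p i)) :: 'a poly) \<le> degree (signof p :: 'a poly) + degree (\<Prod>i=0..<k. F i (p i))"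
      by (rule degree_mult_le)
    moreover have "degree (signof p :: 'a poly) = 0" by (simp add: of_int_poly)
    ultimately show ?thesis using w[OF that] by linarith
  qed
  then have deg: "degree (det (mat k k (\<lambda>(i,j). F i j))) \<le> D"
    unfolding d1 by (intro degree_sum_le) (auto simp: finite_permutations)
  have "coeff (det (mat k k (\<lambda>(i,j). F i j))) D = (\<Sum>p\<in>?P. signof p * coeff (\<Prod>i=0..<k. F i (p i)) D)"
    unfolding d1 coeff_sum coeff_of_int_mult by simp
  also have "\<dots> = det (mat k k (\<lambda>(i,j). coeff (F i j) (nat (c + int i - 2*int j))))"
    unfolding d2 using w by (intro sum.cong) auto
  finally show ?thesis using deg unfolding D_def by simp
qed


lemma no_common_root:
  fixes z :: complex
  assumes n: "n > 0" and a: "(1+z)^n = 1" and b: "(1-z)^n = 1"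
  shows "z = 0"
proof -
  have "cmod (1+z) ^ n = 1" using a by (metis norm_one norm_power)
  then have 1: "cmod (1+z) = 1" using n power_eq_iff_eq_base[of n "cmod (1+z)" 1] by simp
  have "cmod (1-z) ^ n = 1" using b by (metis norm_one norm_power)
  then have 2: "cmod (1-z) = 1" using n power_eq_iff_eq_base[of n "cmod (1-z)" 1] by simp
  have "(1 + Re z)^2 + (Im z)^2 = 1" using 1 by (simp add: cmod_def)
  moreover have "(1 - Re z)^2 + (Im z)^2 = 1" using 2 by (simp add: cmod_def)
  ultimately have e: "(1 + Re z)^2 - (1 - Re z)^2 = 0" by linarith
  have "(1 + Re z)^2 - (1 - Re z)^2 = 4 * Re z" by (simp add: power2_eq_square algebra_simps)
  with e have x: "Re z = 0" by simp
  with \<open>(1 + Re z)^2 + (Im z)^2 = 1\<close> have "(Im z)^2 = 0" by simp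
  then have "Im z = 0" by simp
  note x this
  then show ?thesis by (simp add: complex_eq_iff)
qed


lemma coeff_g: "coeff ([:1,1:]^n - 1 :: complex poly) b = (if b = 0 then 0 else of_nat (n choose b))"
proof (cases "b \<le> n")
  case True
  then show ?thesis using coeff_linear_poly_power[of b n 1 "1::complex"] by (simp add: coeff_1)
next
  case False
  then have "coeff ([:1,1:]^n :: complex poly) b = 0"
    by (intro coeff_eq_0) (simp add: degree_linear_power)
  with False show ?thesis by (simp add: coeff_1 binomial_eq_0)
qed

lemma poly_pm: "poly ([:1,1:]^n - 1 :: complex poly) z = (1+z)^n - 1"
  by simp

lemma cdet_nonzero:
  fixes n :: nat
  assumes n3: "n \<ge> 3"
  shows "det (mat (n-2) (n-2) (\<lambda>(i,j). if 1 \<le> 2*int j - int i + 2 \<and> 2*int j - int i + 2 \<le> int n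
             then (of_nat (n choose nat (2*int j - int i + 2)) :: complex) else 0)) \<noteq> 0"
proof
  define K where "K = n - 2"
  define Q where "Q = mat K K (\<lambda>(i,j). if 1 \<le> 2*int j - int i + 2 \<and> 2*int j - int i + 2 \<le> int n
             then (of_nat (n choose nat (2*int j - int i + 2)) :: complex) else 0)"
  assume "det (mat (n-2) (n-2) (\<lambda>(i,j). if 1 \<le> 2*int j - int i + 2 \<and> 2*int j - int i + 2 \<le> int n
             then (of_nat (n choose nat (2*int j - int i + 2)) :: complex) else 0)) = 0"
  then have "det Q = 0" unfolding Q_def K_def .
  have QC: "Q \<in> carrier_mat K K" unfolding Q_def by simp
  then have "det (transpose_mat Q) = 0" using \<open>det Q = 0\<close> det_transpose by metis
  moreover have "transpose_mat Q \<in> carrier_mat K K" using QC by simp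
  ultimately obtain v where v: "v \<in> carrier_vec K" "v \<noteq> 0\<^sub>v K" "transpose_mat Q *\<^sub>v v = 0\<^sub>v K"
    using det_0_iff_vec_prod_zero_field by blast
  have ker: "(\<Sum>i<K. Q $$ (i,j) * v $ i) = 0" if "j < K" for j
  proof -
    have "(transpose_mat Q *\<^sub>v v) $ j = 0" using v(3) that by simp
    then show ?thesis using that QC v(1)
      by (simp add: scalar_prod_def atLeast0LessThan)
  qed
  define g :: "complex poly" where "g = [:1,1:]^n - 1"
  define U :: "complex poly" where "U = (\<Sum>i<K. monom (v $ i) (Suc i))"
  have cU: "coeff (U * g) k = (\<Sum>i<K. if k < Suc i then 0 else v $ i * coeff g (k - Suc i))" for k
    unfolding U_def sum_distrib_right coeff_sum coeff_monom_mult ..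
  have nK: "n = K + 2" unfolding K_def using n3 by simp
  have cg: "coeff g b = (if b = 0 then 0 else of_nat (n choose b))" for b
    unfolding g_def by (rule coeff_g)
  have tm: "(if 2*j+3 < Suc i then 0 else v $ i * coeff g (2*j+3 - Suc i)) = Q $$ (i,j) * v $ i"
    if "i < K" "j < K" for i j
  proof -
    have Qij: "Q $$ (i,j) = (if 1 \<le> 2*int j - int i + 2 \<and> 2*int j - int i + 2 \<le> int n
             then (of_nat (n choose nat (2*int j - int i + 2)) :: complex) else 0)"
      unfolding Q_def using that by simp
    consider "i = 2*j+2" | "i < 2*j+2" | "i > 2*j+2" by linarith
    then show ?thesis
    proof cases
      case 1 then show ?thesis using Qij cg by simp
    next
      case 2
      then have e: "nat (2*int j - int i + 2) = 2*j+3 - Suc i" by linarith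
      have "2*j+3 - Suc i \<noteq> 0" using 2 by linarith
      then show ?thesis using 2 Qij cg e by (auto simp: binomial_eq_0)
    next
      case 3 then show ?thesis using Qij by simp
    qed
  qed
  have odd0: "coeff (U * g) k = 0" if "odd k" for k
  proof -
    obtain j where kj: "k = 2*j+1" using \<open>odd k\<close> oddE by blast
    show ?thesis
    proof (cases j)
      case 0
      then show ?thesis unfolding cU using kj cg by (intro sum.neutral) auto
    next
      case (Suc j')
      then have k3: "k = 2*j'+3" using kj by simp
      show ?thesis
      proof (cases "j' < K")
        case True
        have "coeff (U * g) k = (\<Sum>i<K. Q $$ (i,j') * v $ i)"
          unfolding cU k3 using tm True by (intro sum.cong) auto
        then show ?thesis using ker True by simp
      next
        case False
        show ?thesis unfolding cU
        proof (intro sum.neutral ballI)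
          fix i assume "i \<in> {..<K}"
          then have "n < 2*j'+3 - Suc i" using False nK by auto
          then show "(if k < Suc i then 0 else v $ i * coeff g (k - Suc i)) = 0"
            using cg k3 by (auto simp: binomial_eq_0)
        qed
      qed
    qed
  qed
  have even: "poly (U * g) z = poly (U * g) (-z)" for z
    unfolding poly_altdef
  proof (intro sum.cong refl)
    fix k assume "k \<in> {..degree (U*g)}"
    show "coeff (U * g) k * z ^ k = coeff (U * g) k * (- z) ^ k"
      by (cases "even k") (auto simp: odd0)
  qed
  define R where "R p = p \<circ>\<^sub>p [:0, -1::complex:]" for p
  have pR: "poly (R p) z = poly p (-z)" for p z unfolding R_def by (simp add: poly_pcompose)
  have "poly g 0 = 0" unfolding g_def by simp
  then obtain h where gh: "g = [:0,1:] * h" using poly_eq_0_iff_dvd[of g 0] by (auto elim: dvdE)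
  have "poly ([:0,1:] * (U * h)) = poly ([:0,1:] * (- (R U * R h)))"
  proof
    fix z
    have "poly ([:0,1:] * (U * h)) z = poly (U * g) z" unfolding gh by simp
    also have "\<dots> = poly (U * g) (-z)" by (rule even)
    also have "\<dots> = poly ([:0,1:] * (- (R U * R h))) z" by (simp add: gh pR)
    finally show "poly ([:0,1:] * (U * h)) z = poly ([:0,1:] * (- (R U * R h))) z" .
  qed
  then have "[:0,1:] * (U * h) = [:0,1:] * (- (R U * R h))" by (simp add: poly_eq_poly_eq_iff)
  then have Uh: "U * h = - (R U * R h)" by simp
  have cg1: "coeff g 1 = of_nat n" unfolding g_def coeff_g by simp
  have h0: "poly h 0 \<noteq> 0"
  proof -
    have "coeff g 1 = coeff h 0" unfolding gh by (simp add: coeff_pCons)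
    then show ?thesis using cg1 n3 by (simp add: poly_0_coeff_0)
  qed
  then have hnz: "h \<noteq> 0" by auto
  have cop: "coprime h (R h)"
  proof -
    define d where "d = gcd h (R h)"
    have dnz: "d \<noteq> 0" unfolding d_def using hnz by simp
    have "degree d = 0"
    proof (rule ccontr)
      assume "degree d \<noteq> 0"
      then have "\<not> constant (poly d)" by (simp add: constant_degree)
      then obtain z where z: "poly d z = 0" using fundamental_theorem_of_algebra by blast
      have "d dvd h" "d dvd R h" unfolding d_def by auto
      then have hz: "poly h z = 0" and hmz0: "poly (R h) z = 0" using z
        by (auto elim!: dvdE)
      from hmz0 have hmz: "poly h (-z) = 0" by (simp add: pR)
      have "poly g z = 0" "poly g (-z) = 0" unfolding gh using hz hmz by auto
      then have "(1+z)^n = 1" "(1 - z)^n = 1" unfolding g_def by auto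
      then have "z = 0" using no_common_root[of n z] n3 by auto
      then show False using hz h0 by simp
    qed
    then have "is_unit d" using dnz is_unit_iff_degree by blast
    then show ?thesis unfolding d_def is_unit_gcd .
  qed
  have "h dvd R U * R h" using Uh by (metis dvd_triv_right dvd_minus_iff mult.commute)
  then have hd: "h dvd R U" using cop coprime_dvd_mult_left_iff by blast
  have degU: "degree U \<le> K" unfolding U_def
    by (intro degree_sum_le) (auto intro: order.trans[OF degree_monom_le])
  have degRU: "degree (R U) = degree U" unfolding R_def by (simp add: degree_pcompose)
  have "degree g = n"
  proof (rule antisym)
    show "degree g \<le> n" unfolding g_def
      by (rule order.trans[OF degree_diff_le]) (auto simp: degree_linear_power)
    show "n \<le> degree g" using cg n3 by (intro le_degree) simp
  qed
  then have degh: "degree h = n - 1" unfolding gh using hnz by (simp add: degree_mult_eq)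
  have "R U = 0"
  proof (rule ccontr)
    assume "R U \<noteq> 0"
    then have "degree h \<le> degree (R U)" using hd dvd_imp_degree_le by blast
    then show False using degh degRU degU nK by simp
  qed
  then have "U = 0" unfolding R_def by (rule pcompose_eq_0) simp
  have "v = 0\<^sub>v K"
  proof (rule eq_vecI)
    fix i assume i: "i < dim_vec (0\<^sub>v K)"
    then have iK: "i < K" by simp
    have "coeff U (Suc i) = v $ i" unfolding U_def coeff_sum coeff_monom
      using iK by (simp add: sum.delta)
    then show "v $ i = 0\<^sub>v K $ i" using \<open>U = 0\<close> iK by simp
  next
    show "dim_vec v = dim_vec (0\<^sub>v K)" using v(1) by simp
  qed
  then show False using v(2) by simp
qed


interpretation mc: comm_ring_hom mconst
  by unfold_locales (simp_all add: mconst_def single_add mult_single single_one)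

lemma mconst_eq_0: "mconst x = 0 \<longleftrightarrow> x = 0"
  unfolding mconst_def by (metis lookup_single_eq lookup_zero single_zero)

lemma coeff_pderiv_pow:
  "coeff ((pderiv ^^ t) p) j = of_nat (\<Prod>i<t. j + 1 + i) * coeff p (j + t)"
proof (induction t arbitrary: j)
  case 0 then show ?case by simp
next
  case (Suc t)
  have "coeff ((pderiv ^^ Suc t) p) j = of_nat (Suc j) * coeff ((pderiv ^^ t) p) (Suc j)"
    by (simp add: coeff_pderiv)
  also have "\<dots> = of_nat (Suc j) * (of_nat (\<Prod>i<t. Suc j + 1 + i) * coeff p (Suc j + t))"
    by (simp only: Suc.IH)
  also have "\<dots> = of_nat (Suc j * (\<Prod>i<t. Suc j + 1 + i)) * coeff p (Suc j + t)"
    by (simp only: of_nat_mult mult.assoc)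
  also have "Suc j * (\<Prod>i<t. Suc j + 1 + i) = (\<Prod>i<Suc t. j + 1 + i)"
    by (subst prod.lessThan_Suc_shift) (simp add: ac_simps del: prod.lessThan_Suc)
  also have "Suc j + t = j + Suc t" by simp
  finally show ?case .
qed

lemma fact_add_prod: "fact (a + t) = (fact a :: nat) * (\<Prod>i<t. a + 1 + i)"
  by (induction t) (auto simp: algebra_simps)

lemma gen_f_deg: "degree (gen_f n) \<le> n"
proof -
  have "degree (monom (1::mpoly_Q) n) \<le> n" by (rule degree_monom_le)
  moreover have "degree (\<Sum>i<n. monom (mvar i) i) \<le> n"
    by (intro degree_sum_le) (auto intro: order.trans[OF degree_monom_le])
  ultimately show ?thesis unfolding gen_f_def by (rule degree_add_le)
qed

lemma gen_f_coeff: "coeff (gen_f n) n = 1"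
  unfolding gen_f_def by (simp add: coeff_sum coeff_monom)

lemma phi_props:
  assumes "1 \<le> m" "m \<le> int n"
  shows "degree (phi n m) \<le> n - nat m \<and> coeff (phi n m) (n - nat m) = mconst (of_nat (n choose nat m))"
proof -
  define t where "t = nat m"
  have t: "1 \<le> t" "t \<le> n" using assms unfolding t_def by auto
  have ph: "phi n m = smult (mconst (1 / of_nat (fact t))) ((pderiv ^^ t) (gen_f n))"
    unfolding phi_def t_def using assms by simp
  have "degree ((pderiv ^^ t) (gen_f n)) \<le> n - t"
  proof (rule degree_le, intro allI impI)
    fix j assume "n - t < j"
    then have "degree (gen_f n) < j + t" using gen_f_deg[of n] t by linarith
    then show "coeff ((pderiv ^^ t) (gen_f n)) j = 0" by (simp add: coeff_pderiv_pow coeff_eq_0)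
  qed
  then have d: "degree (phi n m) \<le> n - t" unfolding ph
    using degree_smult_le order.trans by blast
  define P where "P = (\<Prod>i<t. n - t + 1 + i)"
  have "coeff ((pderiv ^^ t) (gen_f n)) (n - t) = of_nat P"
    unfolding coeff_pderiv_pow P_def using t by (simp add: gen_f_coeff)
  then have c1: "coeff (phi n m) (n - t) = mconst (1 / of_nat (fact t)) * mconst (of_nat P)"
    unfolding ph by (simp add: mc.hom_of_nat)
  have "fact n = fact (n - t) * P" using fact_add_prod[of "n - t" t] t unfolding P_def by simp
  moreover have "fact t * fact (n - t) * (n choose t) = fact n" using binomial_fact_lemma[OF t(2)] .
  ultimately have "fact (n - t) * P = fact (n - t) * (fact t * (n choose t))" by (simp add: algebra_simps)
  then have PP: "P = fact t * (n choose t)" by simp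
  have "(1 / of_nat (fact t)) * (of_nat P :: rat) = of_nat (n choose t)"
    unfolding PP by simp
  then have "coeff (phi n m) (n - t) = mconst (of_nat (n choose t))"
    unfolding c1 mc.hom_mult[symmetric] by simp
  with d show ?thesis unfolding t_def by simp
qed

lemma phi_zero: "\<not> (1 \<le> m \<and> m \<le> int n) \<Longrightarrow> phi n m = 0"
  by (auto simp: phi_def)

lemma M_entry_eq: "M_entry n (i+1) (j+1) = phi n (2*int j - int i + 2)"
proof (cases "even i")
  case True
  then obtain a where "i = 2*a" by (auto elim: evenE)
  then show ?thesis unfolding M_entry_def by simp
next
  case False
  then obtain a where "i = 2*a+1" by (auto elim: oddE)
  then show ?thesis unfolding M_entry_def by (simp add: ac_simps)
qed


lemma half_aux: assumes "2 * (x::int) = int N" shows "nat x = N div 2"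
proof -
  have x0: "0 \<le> x" using assms by linarith
  have "int N = int (2 * nat x)" using assms x0 by simp
  then have "N = 2 * nat x" by (simp only: of_nat_eq_iff)
  then show ?thesis by simp
qed

lemma gauss_int: "2 * (\<Sum>i<k. int i) = int k * (int k - 1)"
  by (induction k) (auto simp: algebra_simps)

theorem theorem5:
  fixes n :: nat
  assumes "n \<ge> 3"
  shows "Polynomial.degree (H_minor n (n - 2)) = (n - 1) * (n - 2) div 2"
proof -
  define k where "k = n - 2"
  define c :: int where "c = int n - 2"
  define F where "F i j = phi n (2*int j - int i + 2)" for i j
  define q :: "nat \<Rightarrow> nat \<Rightarrow> rat" where
    "q i j = (if 1 \<le> 2*int j - int i + 2 \<and> 2*int j - int i + 2 \<le> int n
             then of_nat (n choose nat (2*int j - int i + 2)) else 0)" for i j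
  have H: "H_minor n (n - 2) = det (mat k k (\<lambda>(i,j). F i j))"
    unfolding H_minor_def k_def F_def M_entry_eq ..
  have hyp: "0 \<le> c + int i - 2*int j \<and> degree (F i j) \<le> nat (c + int i - 2*int j)"
    if "i<k" "j<k" "F i j \<noteq> 0" for i j
  proof -
    have m: "1 \<le> 2*int j - int i + 2 \<and> 2*int j - int i + 2 \<le> int n"
      using that(3) phi_zero unfolding F_def by blast
    then have "n - nat (2*int j - int i + 2) = nat (c + int i - 2*int j)" unfolding c_def by linarith
    then show ?thesis using phi_props[of "2*int j - int i + 2" n] m unfolding F_def c_def by auto
  qed
  from det_weight[of k F c, OF hyp]
  have dw: "degree (det (mat k k (\<lambda>(i,j). F i j))) \<le> nat (int k * c - (\<Sum>i<k. int i))"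
    "coeff (det (mat k k (\<lambda>(i,j). F i j))) (nat (int k * c - (\<Sum>i<k. int i)))
     = det (mat k k (\<lambda>(i,j). coeff (F i j) (nat (c + int i - 2*int j))))" by auto
  have D: "nat (int k * c - (\<Sum>i<k. int i)) = (n - 1) * (n - 2) div 2"
  proof -
    define p where "p = n - 3"
    have np: "n = p + 3" using assms unfolding p_def by simp
    have kp: "k = p + 1" unfolding k_def np by simp
    have "2 * (int k * c - (\<Sum>i<k. int i)) = int ((n - 1) * (n - 2))"
      using gauss_int[of k] unfolding kp c_def np by (simp add: algebra_simps)
    then show ?thesis by (rule half_aux)
  qed
  have ent: "coeff (F i j) (nat (c + int i - 2*int j)) = mconst (q i j)" for i j
  proof (cases "1 \<le> 2*int j - int i + 2 \<and> 2*int j - int i + 2 \<le> int n")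
    case True
    then have "n - nat (2*int j - int i + 2) = nat (c + int i - 2*int j)" unfolding c_def by linarith
    then show ?thesis using phi_props[of "2*int j - int i + 2" n] True unfolding F_def q_def by auto
  next
    case False
    then have "F i j = 0" unfolding F_def using phi_zero by blast
    moreover have "q i j = 0" unfolding q_def by (rule if_not_P[OF False])
    ultimately show ?thesis by simp
  qed
  have "mat k k (\<lambda>(i,j). coeff (F i j) (nat (c + int i - 2*int j))) = map_mat mconst (mat k k (\<lambda>(i,j). q i j))"
    by (rule eq_matI) (auto simp: ent)
  then have cf: "coeff (H_minor n (n - 2)) ((n - 1) * (n - 2) div 2) = mconst (det (mat k k (\<lambda>(i,j). q i j)))"
    using dw(2) unfolding H D by simp
  have "map_mat (of_rat :: rat \<Rightarrow> complex) (mat k k (\<lambda>(i,j). q i j)) =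
     mat (n-2) (n-2) (\<lambda>(i,j). if 1 \<le> 2*int j - int i + 2 \<and> 2*int j - int i + 2 \<le> int n
             then (of_nat (n choose nat (2*int j - int i + 2)) :: complex) else 0)"
    by (rule eq_matI) (auto simp: q_def k_def of_rat_hom.hom_of_nat)
  then have "of_rat (det (mat k k (\<lambda>(i,j). q i j))) \<noteq> (0::complex)"
    using cdet_nonzero[OF assms] by (metis of_rat_hom.hom_det)
  then have "det (mat k k (\<lambda>(i,j). q i j)) \<noteq> 0" by auto
  then have "coeff (H_minor n (n - 2)) ((n - 1) * (n - 2) div 2) \<noteq> 0"
    unfolding cf mconst_eq_0 .
  then have "(n - 1) * (n - 2) div 2 \<le> degree (H_minor n (n - 2))" by (rule le_degree)
  moreover have "degree (H_minor n (n - 2)) \<le> (n - 1) * (n - 2) div 2" using dw(1) unfolding H D .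
  ultimately show ?thesis by simp
qed

end
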